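(* Let $n\ge2$ and $d>2$. Let $S=\{\mathbf{m}\in T_{n,d}:\max(\mathbf{m})\ge d-1\}$ and let $A\subseteq\mathbb{N}^n$ be the semigroup generated by $S$. Then $\mathcal{A}_{n,d}\setminus A$ is finite. More precisely, if $\mathbf{e}\in\mathcal{A}_{n,d}$ satisfies $\max(\mathbf{e})\ge(n-1)(d^2-d)$, then $\mathbf{e}\in A$. Consequently, for any semigroup $B$ generated by a set $U$ with $S\subseteq U\subseteq T_{n,d}$, the set $\mathcal{A}_{n,d}\setminus B$ is finite.
   Context: For $\mathbf{a}\in\mathbb{N}^n$, $|\mathbf{a}|=\sum_i a_i$ and $\max(\mathbf{a})=\max_i a_i$. $T_{n,d}=\{\mathbf{a}\in\mathbb{N}^n:|\mathbf{a}|=d\}$ and $\mathcal{A}_{n,d}$ is the additive semigroup generated by $T_{n,d}$. *)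

theory Defs
  imports Main
begin

text \<open>Vectors in N^n are represented as functions nat => nat vanishing at indices >= n.\<close>

definition vsum :: "nat \<Rightarrow> (nat \<Rightarrow> nat) \<Rightarrow> nat" where
  "vsum n a = (\<Sum>i<n. a i)"

definition vmax :: "nat \<Rightarrow> (nat \<Rightarrow> nat) \<Rightarrow> nat" where
  "vmax n a = Max (a ` {..<n})"

definition T :: "nat \<Rightarrow> nat \<Rightarrow> (nat \<Rightarrow> nat) set" where
  "T n d = {a. (\<forall>i\<ge>n. a i = 0) \<and> vsum n a = d}"

inductive_set sg :: "(nat \<Rightarrow> nat) set \<Rightarrow> (nat \<Rightarrow> nat) set" for G where
  gen: "a \<in> G \<Longrightarrow> a \<in> sg G"
| add: "a \<in> sg G \<Longrightarrow> b \<in> sg G \<Longrightarrow> (\<lambda>i. a i + b i) \<in> sg G"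

end

theory Submission
  imports Defs "HOL-Library.FuncSet"
begin

lemma sg_mono: "x \<in> sg A \<Longrightarrow> A \<subseteq> B \<Longrightarrow> x \<in> sg B"
  by (induction rule: sg.induct) (auto intro: sg.intros)

lemma vsum_add: "vsum n (\<lambda>i. a i + b i) = vsum n a + vsum n b"
  by (simp add: vsum_def sum.distrib)

lemma sg_T_props: "e \<in> sg (T n d) \<Longrightarrow> (\<forall>i\<ge>n. e i = 0) \<and> d dvd vsum n e"
  by (induction rule: sg.induct) (auto simp: T_def vsum_add)

definition Z :: "(nat \<Rightarrow> nat) set \<Rightarrow> (nat \<Rightarrow> nat) set" where
  "Z S = insert (\<lambda>_. 0) (sg S)"

lemma Z_add: "a \<in> Z S \<Longrightarrow> b \<in> Z S \<Longrightarrow> (\<lambda>i. a i + b i) \<in> Z S"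
  unfolding Z_def by (auto intro: sg.intros)

lemma Z_mult: "v \<in> S \<Longrightarrow> (\<lambda>k. c * v k) \<in> Z S"
proof (induction c)
  case 0
  then show ?case by (simp add: Z_def)
next
  case (Suc c)
  have "v \<in> Z S" using Suc by (simp add: Z_def sg.gen)
  from Z_add[OF this Suc.IH[OF Suc.prems]] show ?case by (simp add: add.commute)
qed

lemma Z_sum: "finite I \<Longrightarrow> (\<forall>i\<in>I. f i \<in> Z S) \<Longrightarrow> (\<lambda>k. \<Sum>i\<in>I. f i k) \<in> Z S"
proof (induction I rule: finite_induct)
  case empty
  then show ?case by (simp add: Z_def)
next
  case (insert x F)
  have "(\<lambda>k. f x k + (\<Sum>i\<in>F. f i k)) \<in> Z S"
    using insert by (intro Z_add) auto
  then show ?case using insert by simp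
qed

lemma key:
  fixes n d :: nat
  assumes n2: "n \<ge> 2" and d2: "d > 2"
  defines "S \<equiv> {m \<in> T n d. vmax n m \<ge> d - 1}"
  assumes e: "e \<in> sg (T n d)" and big: "vmax n e \<ge> (n - 1) * (d^2 - d)"
  shows "e \<in> sg S"
proof -
  have ez: "\<forall>i\<ge>n. e i = 0" and edvd: "d dvd vsum n e" using sg_T_props[OF e] by auto
  have fin: "finite (e ` {..<n})" and ne: "e ` {..<n} \<noteq> {}" using n2 by (auto simp: lessThan_empty_iff)
  obtain j where jn: "j < n" and ej: "e j = vmax n e"
    using Max_in[OF fin ne] unfolding vmax_def by auto
  define I where "I = {..<n} - {j}"
  define r where "r i = e i mod d" for i
  define q where "q i = e i div d" for i
  define R where "R = (\<Sum>i\<in>I. r i)"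
  define dl where "dl i = (\<lambda>k. if k = i then 1 else (0::nat))" for i :: nat
  define v where "v i = (\<lambda>k. (d-1) * dl j k + dl i k)" for i
  define w where "w i = (\<lambda>k. d * dl i k)" for i
  have finI: "finite I" and cardI: "card I = n - 1" using jn by (auto simp: I_def)
  have rle: "r i \<le> d - 1" for i
  proof -
    have "e i mod d < d" using d2 by simp
    thus ?thesis unfolding r_def by linarith
  qed
  have "R \<le> (\<Sum>i\<in>I. d - 1)" unfolding R_def by (rule sum_mono) (use rle in auto)
  hence Rle: "R \<le> (n-1) * (d-1)" using cardI by simp
  have "(d-1) * R \<le> (d-1) * ((n-1)*(d-1))" using Rle by simp
  also have "\<dots> = (n-1) * ((d-1)*(d-1))" by simp
  also have "(d-1)*(d-1) \<le> d^2 - d" using d2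
    by (simp add: power2_eq_square diff_mult_distrib diff_mult_distrib2)
  hence "(n-1) * ((d-1)*(d-1)) \<le> (n-1) * (d^2 - d)" by simp
  finally have jbig: "(d-1) * R \<le> e j" using big ej by linarith
  have vs: "vsum n e = e j + (\<Sum>i\<in>I. e i)"
    unfolding vsum_def I_def using jn by (simp add: sum.remove)
  have "(\<Sum>i\<in>I. e i) = (\<Sum>i\<in>I. q i * d + r i)" by (simp add: q_def r_def)
  also have "\<dots> = d * (\<Sum>i\<in>I. q i) + R" by (simp add: R_def sum.distrib sum_distrib_left mult.commute)
  finally have "vsum n e = (e j + R) + d * (\<Sum>i\<in>I. q i)" using vs by simp
  hence "d dvd (e j + R) + d * (\<Sum>i\<in>I. q i)" using edvd by simp
  hence "d dvd e j + R" using dvd_add_left_iff[of d "d * (\<Sum>i\<in>I. q i)" "e j + R"] by simp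
  hence "d dvd (e j + R) - d * R" by (simp add: dvd_diff_nat)
  moreover have "(e j + R) - d * R = e j - (d-1)*R" using d2
    by (simp add: diff_mult_distrib)
  ultimately have mdvd: "d dvd e j - (d-1)*R" by simp
  define m where "m = (e j - (d-1)*R) div d"
  have md: "m * d = e j - (d-1)*R" using mdvd by (simp add: m_def)
  define f where "f i = (\<lambda>k. r i * v i k + q i * w i k)" for i
  have vS: "v i \<in> S" if "i \<in> I" for i
  proof -
    have ij: "i \<noteq> j" "i < n" using that by (auto simp: I_def)
    have "vsum n (v i) = d" unfolding vsum_def v_def dl_def
      using ij jn d2 by (simp add: sum.distrib sum_distrib_left[symmetric])
    moreover have "v i j = d - 1" using ij by (simp add: v_def dl_def)
    hence "vmax n (v i) \<ge> d - 1"
    proof -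
      have "v i j \<le> Max (v i ` {..<n})" by (rule Max_ge) (use jn in auto)
      thus ?thesis using \<open>v i j = d - 1\<close> by (simp add: vmax_def)
    qed
    ultimately show ?thesis using ij jn by (auto simp: S_def T_def v_def dl_def)
  qed
  have wS: "w i \<in> S" if "i < n" for i
  proof -
    have "vsum n (w i) = d" unfolding vsum_def w_def dl_def
      using that by (simp add: sum_distrib_left[symmetric])
    moreover have "w i i = d" by (simp add: w_def dl_def)
    hence "vmax n (w i) \<ge> d - 1"
    proof -
      have "w i i \<le> Max (w i ` {..<n})" by (rule Max_ge) (use that in auto)
      thus ?thesis using \<open>w i i = d\<close> by (simp add: vmax_def)
    qed
    ultimately show ?thesis using that by (auto simp: S_def T_def w_def dl_def)
  qed
  have fZ: "\<forall>i\<in>I. f i \<in> Z S"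
  proof
    fix i assume "i \<in> I"
    hence "i < n" by (simp add: I_def)
    show "f i \<in> Z S" unfolding f_def
      using Z_add[OF Z_mult[OF vS[OF \<open>i \<in> I\<close>]] Z_mult[OF wS[OF \<open>i < n\<close>]]] by simp
  qed
  have "(\<lambda>k. (\<Sum>i\<in>I. f i k) + m * w j k) \<in> Z S"
    using Z_add[OF Z_sum[OF finI fZ] Z_mult[OF wS[OF jn]]] .
  moreover have "(\<lambda>k. (\<Sum>i\<in>I. f i k) + m * w j k) = e"
  proof
    fix k
    show "(\<Sum>i\<in>I. f i k) + m * w j k = e k"
    proof (cases "k = j")
      case True
      have "(\<Sum>i\<in>I. f i k) = (\<Sum>i\<in>I. r i * (d-1))"
        using True by (intro sum.cong) (auto simp: f_def v_def w_def dl_def I_def)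
      also have "\<dots> = (d-1)*R" by (simp add: R_def sum_distrib_right mult.commute)
      finally show ?thesis using True md jbig by (simp add: w_def dl_def mult.commute)
    next
      case False
      have "(\<Sum>i\<in>I. f i k) = (\<Sum>i\<in>I. if i = k then r i + q i * d else 0)"
        using False by (intro sum.cong) (auto simp: f_def v_def w_def dl_def)
      also have "\<dots> = (if k \<in> I then e k else 0)"
        using finI by (simp add: sum.delta r_def q_def)
      finally show ?thesis using False ez by (auto simp: w_def dl_def I_def)
    qed
  qed
  ultimately have "e \<in> Z S" by simp
  moreover have "e \<noteq> (\<lambda>_. 0)"
  proof
    assume "e = (\<lambda>_. 0)"
    hence "(n - 1) * (d^2 - d) = 0" using big ej by simp
    moreover have "d^2 - d > 0" using d2 by (simp add: power2_eq_square)
    ultimately show False using n2 by simp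
  qed
  ultimately show ?thesis by (simp add: Z_def)
qed

theorem lemma5p1:
  fixes n d :: nat
  assumes "n \<ge> 2" and "d > 2"
  defines "S \<equiv> {m \<in> T n d. vmax n m \<ge> d - 1}"
  shows "finite (sg (T n d) - sg S)
     \<and> (\<forall>e \<in> sg (T n d). vmax n e \<ge> (n - 1) * (d^2 - d) \<longrightarrow> e \<in> sg S)
     \<and> (\<forall>U. S \<subseteq> U \<and> U \<subseteq> T n d \<longrightarrow> finite (sg (T n d) - sg U))"
proof -
  define B where "B = (n - 1) * (d^2 - d)"
  have K: "\<forall>e \<in> sg (T n d). vmax n e \<ge> B \<longrightarrow> e \<in> sg S"
    using key[OF assms(1,2)] unfolding S_def B_def by blast
  have F: "finite {e::nat\<Rightarrow>nat. (\<forall>i\<ge>n. e i = 0) \<and> (\<forall>i<n. e i < B)}" (is "finite ?X")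
  proof (rule finite_subset)
    show "?X \<subseteq> (\<lambda>f i. if i < n then f i else 0) ` (PiE {..<n} (\<lambda>_. {..<B}))"
    proof
      fix e assume e: "e \<in> ?X"
      have "e = (\<lambda>i. if i < n then (\<lambda>i. if i < n then e i else undefined) i else 0)"
        using e by (auto simp: fun_eq_iff)
      moreover have "(\<lambda>i. if i < n then e i else undefined) \<in> PiE {..<n} (\<lambda>_. {..<B})" using e by (auto simp: PiE_iff extensional_def)
      ultimately show "e \<in> (\<lambda>f i. if i < n then f i else 0) ` (PiE {..<n} (\<lambda>_. {..<B}))"
        by (rule image_eqI)
    qed
    show "finite ((\<lambda>f i. if i < n then f i else 0) ` (PiE {..<n} (\<lambda>_. {..<B})))"
      by (intro finite_imageI finite_PiE) auto
  qed
  have sub: "sg (T n d) - sg S \<subseteq> ?X"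
  proof
    fix e assume e: "e \<in> sg (T n d) - sg S"
    hence lt: "vmax n e < B" using K by (meson DiffD1 DiffD2 not_less)
    have "e i < B" if "i < n" for i
    proof -
      have "e i \<le> vmax n e" unfolding vmax_def using that by auto
      thus ?thesis using lt by simp
    qed
    thus "e \<in> ?X" using sg_T_props e by auto
  qed
  have F1: "finite (sg (T n d) - sg S)" using finite_subset[OF sub F] .
  have "finite (sg (T n d) - sg U)" if "S \<subseteq> U" for U
    by (rule finite_subset[OF _ F1]) (use sg_mono that in blast)
  thus ?thesis using F1 K unfolding B_def by blast
qed

end
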